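(* Let $D=(V,A)$ be a digraph, let $C\subseteq V$ be a clique-cutset of $D$, and let $B,B'$ be a bipartition of $V\setminus C$ such that $B$ is the vertex set of a connected component of $D[V\setminus C]$. Suppose there exist subsets $K_1,\dots,K_{|C|+1}$ of $V$ such that for every $i\in\{1,\ldots,|C|+1\}$, $K_i$ is a kernel of $D\left[B\cup\left(C\setminus\bigcup_{j=1}^{i-1}K_j\right)\right]$, and suppose that $D\left[B'\cup\left(C\cap\bigcup_{j=1}^{|C|}K_j\right)\right]$ has a kernel $K$. Then there exists $i\in\{1,\ldots,|C|+1\}$ such that $K\cup K_i$ is a kernel of $D$.
   Context: For a digraph $D=(V,A)$, $D[W]$ denotes the subdigraph induced by $W\subseteq V$. A set $S\subseteq V$ is stable if no two vertices of $S$ are adjacent (joined by an arc in either direction), and absorbing if for every $u\in V\setminus S$ there is $v\in S$ with $(u,v)\in A$; a kernel is a set that is both stable and absorbing. A clique-cutset of $D$ is a set $C\subseteq V$ such that the vertices of $C$ are pairwise adjacent and $D[V\setminus C]$ is disconnected. *)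

theory Defs
  imports Main
begin

definition digraph :: "'a set \<Rightarrow> ('a \<times> 'a) set \<Rightarrow> bool" where
  "digraph V A \<longleftrightarrow> finite V \<and> A \<subseteq> V \<times> V \<and> (\<forall>v. (v, v) \<notin> A)"

definition adj :: "('a \<times> 'a) set \<Rightarrow> 'a \<Rightarrow> 'a \<Rightarrow> bool" where
  "adj A u v \<longleftrightarrow> (u, v) \<in> A \<or> (v, u) \<in> A"

definition induced_arcs :: "('a \<times> 'a) set \<Rightarrow> 'a set \<Rightarrow> ('a \<times> 'a) set" where
  "induced_arcs A W = A \<inter> (W \<times> W)"

definition stable :: "('a \<times> 'a) set \<Rightarrow> 'a set \<Rightarrow> bool" where
  "stable A S \<longleftrightarrow> (\<forall>u\<in>S. \<forall>v\<in>S. \<not> adj A u v)"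

definition absorbing :: "'a set \<Rightarrow> ('a \<times> 'a) set \<Rightarrow> 'a set \<Rightarrow> bool" where
  "absorbing V A S \<longleftrightarrow> S \<subseteq> V \<and> (\<forall>u\<in>V - S. \<exists>v\<in>S. (u, v) \<in> A)"

definition kernel :: "'a set \<Rightarrow> ('a \<times> 'a) set \<Rightarrow> 'a set \<Rightarrow> bool" where
  "kernel V A S \<longleftrightarrow> S \<subseteq> V \<and> stable A S \<and> absorbing V A S"

definition kernel_of_induced :: "('a \<times> 'a) set \<Rightarrow> 'a set \<Rightarrow> 'a set \<Rightarrow> bool" where
  "kernel_of_induced A W S \<longleftrightarrow> kernel W (induced_arcs A W) S"

definition clique :: "('a \<times> 'a) set \<Rightarrow> 'a set \<Rightarrow> bool" where
  "clique A C \<longleftrightarrow> (\<forall>u\<in>C. \<forall>v\<in>C. u \<noteq> v \<longrightarrow> adj A u v)"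

definition connected_induced :: "('a \<times> 'a) set \<Rightarrow> 'a set \<Rightarrow> bool" where
  "connected_induced A W \<longleftrightarrow> W \<noteq> {} \<and>
     (\<forall>X. X \<subseteq> W \<and> X \<noteq> {} \<and> X \<noteq> W \<longrightarrow> (\<exists>u\<in>X. \<exists>v\<in>W - X. adj A u v))"

definition disconnected_induced :: "('a \<times> 'a) set \<Rightarrow> 'a set \<Rightarrow> bool" where
  "disconnected_induced A W \<longleftrightarrow> \<not> connected_induced A W"

definition component_of_induced :: "('a \<times> 'a) set \<Rightarrow> 'a set \<Rightarrow> 'a set \<Rightarrow> bool" where
  "component_of_induced A W B \<longleftrightarrow> B \<subseteq> W \<and> connected_induced A B \<and>
     (\<forall>u\<in>B. \<forall>v\<in>W - B. \<not> adj A u v)"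

definition clique_cutset :: "'a set \<Rightarrow> ('a \<times> 'a) set \<Rightarrow> 'a set \<Rightarrow> bool" where
  "clique_cutset V A C \<longleftrightarrow> C \<subseteq> V \<and> clique A C \<and> disconnected_induced A (V - C)"

end

theory Submission
  imports Defs
begin

lemma stable_induced:
  assumes "stable (induced_arcs A W) S" "S \<subseteq> W"
  shows "stable A S"
  using assms unfolding stable_def adj_def induced_arcs_def by blast

lemma clique_stable_single:
  assumes "stable A X" "clique A C" "c \<in> X" "c \<in> C"
  shows "X \<inter> C \<subseteq> {c}"
  using assms unfolding stable_def clique_def by blast

theorem lemma1:
  fixes V :: "'a set" and A :: "('a \<times> 'a) set" and C B B' K :: "'a set"
    and Ks :: "nat \<Rightarrow> 'a set"
  assumes "digraph V A"
    and "clique_cutset V A C"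
    and "B \<union> B' = V - C" and "B \<inter> B' = {}"
    and "component_of_induced A (V - C) B"
    and "\<forall>i\<in>{1..card C + 1}.
           kernel_of_induced A (B \<union> (C - (\<Union>j\<in>{1..<i}. Ks j))) (Ks i)"
    and "kernel_of_induced A (B' \<union> (C \<inter> (\<Union>j\<in>{1..card C}. Ks j))) K"
  shows "\<exists>i\<in>{1..card C + 1}. kernel V A (K \<union> Ks i)"
proof -
  have CV: "C \<subseteq> V" and clq: "clique A C" using assms(2) unfolding clique_cutset_def by auto
  have fin: "finite C" using assms(1) CV finite_subset unfolding digraph_def by blast
  have loop: "\<And>v. (v, v) \<notin> A" using assms(1) unfolding digraph_def by blast
  have B'eq: "B' = (V - C) - B" using assms(3,4) by blast
  have noadj: "\<And>u v. u \<in> B \<Longrightarrow> v \<in> B' \<Longrightarrow> \<not> adj A u v"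
    using assms(5) B'eq unfolding component_of_induced_def by blast
  define W where "W i = B \<union> (C - (\<Union>j\<in>{1..<i}. Ks j))" for i
  define S where "S = C \<inter> (\<Union>j\<in>{1..card C}. Ks j)"
  have Ki: "Ks i \<subseteq> W i \<and> stable A (Ks i) \<and> (\<forall>u\<in>W i - Ks i. \<exists>v\<in>Ks i. (u,v)\<in>A)"
    if "i \<in> {1..card C+1}" for i
  proof -
    have k: "kernel_of_induced A (W i) (Ks i)" using assms(6) that W_def by auto
    hence "Ks i \<subseteq> W i" "stable (induced_arcs A (W i)) (Ks i)"
      "\<forall>u\<in>W i - Ks i. \<exists>v\<in>Ks i. (u,v)\<in>induced_arcs A (W i)"
      unfolding kernel_of_induced_def kernel_def absorbing_def by auto
    thus ?thesis using stable_induced unfolding induced_arcs_def by blast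
  qed
  have Kf: "K \<subseteq> B' \<union> S \<and> stable A K \<and> (\<forall>u\<in>(B' \<union> S) - K. \<exists>v\<in>K. (u,v)\<in>A)"
  proof -
    have k: "kernel_of_induced A (B' \<union> S) K" using assms(7) S_def by auto
    hence "K \<subseteq> B' \<union> S" "stable (induced_arcs A (B' \<union> S)) K"
      "\<forall>u\<in>(B' \<union> S) - K. \<exists>v\<in>K. (u,v)\<in>induced_arcs A (B' \<union> S)"
      unfolding kernel_of_induced_def kernel_def absorbing_def by auto
    thus ?thesis using stable_induced unfolding induced_arcs_def by blast
  qed
  have BV: "B \<subseteq> V" "B' \<subseteq> V" using assms(3) by auto
  have main: "kernel V A (K \<union> Ks i)" if i: "i \<in> {1..card C+1}" and eq: "K \<inter> C = Ks i \<inter> C" for i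
  proof -
    have Kis: "Ks i \<subseteq> W i" "stable A (Ks i)" "\<forall>u\<in>W i - Ks i. \<exists>v\<in>Ks i. (u,v)\<in>A"
      using Ki[OF i] by auto
    have Ks: "K \<subseteq> B' \<union> S" "stable A K" "\<forall>u\<in>(B' \<union> S) - K. \<exists>v\<in>K. (u,v)\<in>A"
      using Kf by auto
    have WS: "C \<inter> (\<Union>j\<in>{1..<i}. Ks j) \<subseteq> S" unfolding S_def
    proof
      fix x assume "x \<in> C \<inter> (\<Union>j\<in>{1..<i}. Ks j)"
      then obtain j where "x \<in> C" "j \<in> {1..<i}" "x \<in> Ks j" by blast
      moreover have "j \<in> {1..card C}" using calculation(2) i by auto
      ultimately show "x \<in> C \<inter> (\<Union>j\<in>{1..card C}. Ks j)" by blast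
    qed
    have sub: "K \<union> Ks i \<subseteq> V" using Kis(1) Ks(1) BV CV unfolding W_def S_def by blast
    have st: "stable A (K \<union> Ks i)"
      unfolding stable_def
    proof (intro ballI)
      fix u v assume u: "u \<in> K \<union> Ks i" and v: "v \<in> K \<union> Ks i"
      have cross: "\<not> adj A x y" if x: "x \<in> K" and y: "y \<in> Ks i" for x y
      proof (cases "x \<in> C")
        case True
        then have "x \<in> Ks i" using eq x by blast
        thus ?thesis using Kis(2) y unfolding stable_def by blast
      next
        case xn: False
        show ?thesis
        proof (cases "y \<in> C")
          case True
          then have "y \<in> K" using eq y by blast
          thus ?thesis using Ks(2) x unfolding stable_def by blast
        next
          case False
          have "x \<in> B'" using xn x Ks(1) unfolding S_def by blast
          moreover have "y \<in> B" using False y Kis(1) unfolding W_def by blast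
          ultimately show ?thesis using noadj unfolding adj_def by blast
        qed
      qed
      show "\<not> adj A u v"
        using u v cross Ks(2) Kis(2) unfolding stable_def adj_def by blast
    qed
    have ab: "\<forall>u\<in>V - (K \<union> Ks i). \<exists>v\<in>K \<union> Ks i. (u,v)\<in>A"
    proof
      fix u assume u: "u \<in> V - (K \<union> Ks i)"
      show "\<exists>v\<in>K \<union> Ks i. (u,v)\<in>A"
      proof (cases "u \<in> B' \<union> S")
        case True thus ?thesis using Ks(3) u by blast
      next
        case False
        hence "u \<in> W i" using u WS assms(3) unfolding W_def by blast
        thus ?thesis using Kis(3) u by blast
      qed
    qed
    show ?thesis unfolding kernel_def absorbing_def using sub st ab by blast
  qed
  show ?thesis
  proof (cases "K \<inter> C = {}")
    case True
    have "\<exists>i\<in>{1..card C+1}. Ks i \<inter> C = {}"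
    proof (rule ccontr)
      assume "\<not> ?thesis"
      hence ne: "\<And>i. i \<in> {1..card C+1} \<Longrightarrow> Ks i \<inter> C \<noteq> {}" by blast
      define f where "f i = (SOME x. x \<in> Ks i \<inter> C)" for i
      have fin_: "\<And>i. i \<in> {1..card C+1} \<Longrightarrow> f i \<in> Ks i \<inter> C"
        unfolding f_def using ne by (metis some_in_eq)
      have lt: "f i \<noteq> f i'" if "i \<in> {1..card C+1}" "i' \<in> {1..card C+1}" "i < i'" for i i'
      proof -
        have "f i' \<in> W i'" "f i' \<in> C" using fin_[OF that(2)] Ki[OF that(2)] by auto
        moreover have "B \<inter> C = {}" using assms(3) by blast
        ultimately have "f i' \<notin> Ks i" using that unfolding W_def by auto
        thus ?thesis using fin_[OF that(1)] by auto
      qed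
      have "inj_on f {1..card C+1}"
        unfolding inj_on_def by (metis lt linorder_neqE_nat)
      moreover have "f ` {1..card C+1} \<subseteq> C" using fin_ by blast
      ultimately have "card {1..card C+1} \<le> card C"
        using card_inj_on_le fin by blast
      thus False by simp
    qed
    then obtain i where i: "i \<in> {1..card C+1}" "Ks i \<inter> C = {}" by blast
    have "K \<inter> C = Ks i \<inter> C" using True i(2) by simp
    hence "kernel V A (K \<union> Ks i)" by (rule main[OF i(1)])
    thus ?thesis using i(1) by (rule bexI)
  next
    case False
    then obtain c where c: "c \<in> K" "c \<in> C" by blast
    have KS: "K \<subseteq> B' \<union> S" using Kf by (rule conjunct1)
    have "c \<in> S" using c assms(3) KS by blast
    then obtain i where i: "i \<in> {1..card C}" "c \<in> Ks i" unfolding S_def by blast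
    hence i': "i \<in> {1..card C+1}" by auto
    have stK: "stable A K" using Kf by blast
    have stKi: "stable A (Ks i)" using Ki[OF i'] by blast
    have e1: "K \<inter> C \<subseteq> {c}" by (rule clique_stable_single[OF stK clq c])
    have e2: "Ks i \<inter> C \<subseteq> {c}" by (rule clique_stable_single[OF stKi clq i(2) c(2)])
    have "K \<inter> C = Ks i \<inter> C" using e1 e2 c i(2) by blast
    hence "kernel V A (K \<union> Ks i)" by (rule main[OF i'])
    thus ?thesis using i' by (rule bexI)
  qed
qed

end
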